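(* Let $k$ be a field of characteristic zero in which every element admits an $n$th root. Then for every multiplicatively alternating matrix $q\in M_n(k)$ there exists $\tau\in(k^\times)^n$ such that the matrix $\tau q\tau^{-1}$, with entries $\frac{\tau_i}{\tau_j}q_{ij}$, is normalized.
   Context: A matrix $q\in M_n(k)$ is multiplicatively alternating if all entries are invertible, $q_{ii}=1$ and $q_{ij}=q_{ji}^{-1}$. It is normalized if $\prod_jq_{ij}=1$ for all $i$. *)

theory Defs
  imports Main
begin

text \<open>n x n matrices over k are represented as functions nat => nat => k,
  with indices ranging over {0..<n}.\<close>

definition mult_alternating :: "nat \<Rightarrow> (nat \<Rightarrow> nat \<Rightarrow> 'a::field) \<Rightarrow> bool" where
  "mult_alternating n q \<longleftrightarrow>
     (\<forall>i<n. \<forall>j<n. q i j \<noteq> 0) \<and>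
     (\<forall>i<n. q i i = 1) \<and>
     (\<forall>i<n. \<forall>j<n. q i j = inverse (q j i))"

definition normalized :: "nat \<Rightarrow> (nat \<Rightarrow> nat \<Rightarrow> 'a::field) \<Rightarrow> bool" where
  "normalized n q \<longleftrightarrow> (\<forall>i<n. (\<Prod>j<n. q i j) = 1)"

end

theory Submission
  imports Defs
begin

lemma total_prod:
  fixes q :: "nat \<Rightarrow> nat \<Rightarrow> 'k::field"
  assumes alt: "mult_alternating n q"
  shows "m \<le> n \<Longrightarrow> (\<Prod>i<m. \<Prod>j<m. q i j) = 1"
proof (induction m)
  case 0 then show ?case by simp
next
  case (Suc m)
  have mn: "m < n" using Suc by simp
  have pair: "(\<Prod>i<m. q i m) * (\<Prod>j<m. q m j) = 1"
  proof -
    have "(\<Prod>i<m. q i m) * (\<Prod>j<m. q m j) = (\<Prod>i<m. q i m * q m i)"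
      by (simp add: prod.distrib)
    also have "\<dots> = (\<Prod>i<m. 1)"
    proof (rule prod.cong)
      fix i assume "i \<in> {..<m}"
      then have "i < n" using mn by simp
      then show "q i m * q m i = 1" using alt mn unfolding mult_alternating_def
        by (metis right_inverse)
    qed simp
    finally show ?thesis by simp
  qed
  have qmm: "q m m = 1" using alt mn unfolding mult_alternating_def by blast
  have "(\<Prod>i<Suc m. \<Prod>j<Suc m. q i j) = (\<Prod>i<m. (\<Prod>j<m. q i j) * q i m) * ((\<Prod>j<m. q m j) * q m m)"
    by simp
  also have "\<dots> = (\<Prod>i<m. \<Prod>j<m. q i j) * ((\<Prod>i<m. q i m) * (\<Prod>j<m. q m j)) * q m m"
    by (simp add: prod.distrib algebra_simps)
  also have "\<dots> = 1" using Suc pair qmm by simp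
  finally show ?case .
qed

theorem lemma2p9:
  fixes n :: nat and q :: "nat \<Rightarrow> nat \<Rightarrow> 'k::field_char_0"
  assumes roots: "\<forall>a::'k. \<exists>b. b ^ n = a"
    and alt: "mult_alternating n q"
  shows "\<exists>\<tau> :: nat \<Rightarrow> 'k. (\<forall>i<n. \<tau> i \<noteq> 0) \<and>
           normalized n (\<lambda>i j. (\<tau> i / \<tau> j) * q i j)"
proof (cases "n = 0")
  case True
  then show ?thesis unfolding normalized_def by auto
next
  case False
  define r where "r i = (\<Prod>j<n. q i j)" for i
  have rnz: "r i \<noteq> 0" if "i < n" for i
  proof -
    have "\<forall>i<n. \<forall>j<n. q i j \<noteq> 0" using alt unfolding mult_alternating_def by blast
    then show ?thesis using that unfolding r_def by (simp add: prod_zero_iff)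
  qed
  have rprod: "(\<Prod>i<n. r i) = 1"
    unfolding r_def using total_prod[OF alt] by simp
  have "\<forall>i. \<exists>b. b ^ n = inverse (r i)" using roots by blast
  then obtain x where x: "\<And>i. x i ^ n = inverse (r i)" by metis
  have xnz: "x i \<noteq> 0" if "i < n" for i
    using x[of i] rnz[OF that] False by (metis inverse_zero power_0_left zero_neq_one inverse_nonzero_iff_nonzero)
  define P where "P = (\<Prod>i<n. x i)"
  have Pnz: "P \<noteq> 0" unfolding P_def using xnz by (simp add: prod_zero_iff)
  have Pn: "P ^ n = 1"
  proof -
    have "P ^ n = (\<Prod>i<n. x i ^ n)" unfolding P_def by (simp add: prod_power_distrib)
    also have "\<dots> = inverse (\<Prod>i<n. r i)" using prod_inversef[of r "{..<n}"] by (simp add: x o_def)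
    finally show ?thesis using rprod by simp
  qed
  define \<tau> where "\<tau> = x(0 := x 0 / P)"
  have tnz: "\<forall>i<n. \<tau> i \<noteq> 0" unfolding \<tau>_def using xnz Pnz by auto
  have n0: "0 < n" using False by simp
  have tprod: "(\<Prod>j<n. \<tau> j) = 1"
  proof -
    have "{..<n} = insert 0 {1..<n}" using n0 by auto
    then have "(\<Prod>j<n. \<tau> j) = \<tau> 0 * (\<Prod>j\<in>{1..<n}. \<tau> j)" by simp
    also have "(\<Prod>j\<in>{1..<n}. \<tau> j) = (\<Prod>j\<in>{1..<n}. x j)"
      unfolding \<tau>_def by (rule prod.cong) auto
    also have "\<tau> 0 * (\<Prod>j\<in>{1..<n}. x j) = (x 0 * (\<Prod>j\<in>{1..<n}. x j)) / P"
      unfolding \<tau>_def by simp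
    also have "x 0 * (\<Prod>j\<in>{1..<n}. x j) = P"
      unfolding P_def using \<open>{..<n} = insert 0 {1..<n}\<close> by simp
    finally show ?thesis using Pnz by simp
  qed
  have "normalized n (\<lambda>i j. (\<tau> i / \<tau> j) * q i j)"
    unfolding normalized_def
  proof (intro allI impI)
    fix i assume i: "i < n"
    have "(\<Prod>j<n. (\<tau> i / \<tau> j) * q i j) = (\<Prod>j<n. \<tau> i / \<tau> j) * r i"
      unfolding r_def by (simp only: prod.distrib)
    also have "(\<Prod>j<n. \<tau> i / \<tau> j) = \<tau> i ^ n / (\<Prod>j<n. \<tau> j)"
      by (simp add: prod_dividef)
    also have "\<dots> = \<tau> i ^ n" using tprod by simp
    finally have eq: "(\<Prod>j<n. (\<tau> i / \<tau> j) * q i j) = \<tau> i ^ n * r i" .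
    show "(\<Prod>j<n. (\<tau> i / \<tau> j) * q i j) = 1"
    proof (cases "i = 0")
      case True
      then have "\<tau> i ^ n = x 0 ^ n / P ^ n" unfolding \<tau>_def by (simp add: power_divide)
      then show ?thesis using eq True Pn x[of 0] rnz[OF i] by simp
    next
      case False
      then show ?thesis using eq x[of i] rnz[OF i] unfolding \<tau>_def by simp
    qed
  qed
  then show ?thesis using tnz by blast
qed

end
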